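(* Let $(f_n)$ be twice differentiable strictly concave functions on $\mathbb R^d$, each with unique maximizer $0$, such that $-\nabla^2f_n(x)\succeq\tfrac12I_d$ for all $x$ and $n$. Let $\gamma\in\mathbb R^d$ and $\beta_n\in\mathbb R^d$ with $\gamma^{T}\beta_n\to\infty$. Then for every $\delta>0$ there is a constant $C>0$ depending only on $\delta$ (and $d$) such that for all sufficiently large $n$, $\int_{\mathbb R^d}\gamma^{T}(x+\beta_n)\exp(f_n(x))dx>0$ and $\frac{\big|\int_{\|x\|\ge C}\gamma^{T}(x+\beta_n)\exp(f_n(x))dx\big|}{\int_{\mathbb R^d}\gamma^{T}(x+\beta_n)\exp(f_n(x))dx}\le\delta.$ *)

theory Defs
  imports "HOL-Analysis.Analysis"
begin

definition strictly_concave_on :: "'a::real_vector set \<Rightarrow> ('a \<Rightarrow> real) \<Rightarrow> bool" where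
  "strictly_concave_on S f \<longleftrightarrow>
     (\<forall>x\<in>S. \<forall>y\<in>S. \<forall>t::real. x \<noteq> y \<and> 0 < t \<and> t < 1 \<longrightarrow>
        (1 - t) * f x + t * f y < f ((1 - t) *\<^sub>R x + t *\<^sub>R y))"

end

theory Submission
  imports Defs
begin

lemma scale2:
  fixes g :: "'a::euclidean_space \<Rightarrow> ennreal"
  assumes [measurable]: "g \<in> borel_measurable borel"
  shows "(\<integral>\<^sup>+x. g x \<partial>lborel) = 2^DIM('a) * (\<integral>\<^sup>+x. g (2 *\<^sub>R x) \<partial>lborel)"
proof -
  have eq: "lborel = density (distr lborel borel (\<lambda>x::'a. 0 + (2::real) *\<^sub>R x)) (\<lambda>_. \<bar>2::real\<bar>^DIM('a))"
    by (rule lborel_affine) simp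
  have "(\<integral>\<^sup>+x. g x \<partial>lborel) = (\<integral>\<^sup>+x. g x \<partial>(density (distr lborel borel (\<lambda>x::'a. 0 + (2::real) *\<^sub>R x)) (\<lambda>_. \<bar>2::real\<bar>^DIM('a))))"
    by (rule arg_cong[where f="\<lambda>M. \<integral>\<^sup>+x. g x \<partial>M", OF eq])
  also have "\<dots> = (\<integral>\<^sup>+x. ennreal (\<bar>2::real\<bar>^DIM('a)) * g x \<partial>(distr lborel borel (\<lambda>x::'a. 0 + (2::real) *\<^sub>R x)))"
    by (rule nn_integral_density) auto
  also have "\<dots> = (\<integral>\<^sup>+x. ennreal (\<bar>2::real\<bar>^DIM('a)) * g (0 + 2 *\<^sub>R x) \<partial>lborel)"
    by (rule nn_integral_distr) auto
  also have "\<dots> = ennreal (\<bar>2::real\<bar>^DIM('a)) * (\<integral>\<^sup>+x. g (2 *\<^sub>R x) \<partial>lborel)"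
    by (simp add: nn_integral_cmult)
  finally show ?thesis using ennreal_power[of 2 "DIM('a)"] by simp
qed

lemma calc:
  fixes f :: "'a::real_inner \<Rightarrow> real" and grad :: "'a \<Rightarrow> 'a" and H :: "'a \<Rightarrow> 'a \<Rightarrow> 'a"
  assumes fd: "\<And>x. (f has_derivative (\<lambda>h. grad x \<bullet> h)) (at x)"
    and gd: "\<And>x. (grad has_derivative H x) (at x)"
    and mx: "\<And>x. x \<noteq> 0 \<longrightarrow> f x < f 0"
    and hs: "\<And>x v. v \<bullet> H x v \<le> - (1/2) * (v \<bullet> v)"
  shows "f (2 *\<^sub>R y) \<le> f y - (norm y)^2/2"
proof -
  have "(\<lambda>h. grad 0 \<bullet> h) = (\<lambda>v. 0)"
  proof (rule differential_zero_maxmin[of 0 UNIV f])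
    show "(\<forall>y\<in>UNIV. f y \<le> f 0) \<or> (\<forall>y\<in>UNIV. f 0 \<le> f y)"
      using mx by (metis less_imp_le order_refl)
  qed (use fd in auto)
  then have g0: "grad 0 = 0" by (metis inner_eq_zero_iff)
  have lin: "linear (H x)" for x using gd has_derivative_linear by blast
  define psi where "psi t = grad (t *\<^sub>R y) \<bullet> y + t * (y \<bullet> y) / 2" for t
  have psid: "DERIV psi t :> (H (t *\<^sub>R y) y \<bullet> y + (y \<bullet> y)/2)" for t
  proof -
    have "((\<lambda>t. grad (t *\<^sub>R y)) has_derivative (\<lambda>s. H (t *\<^sub>R y) (s *\<^sub>R y))) (at t)"
      using has_derivative_compose[OF has_derivative_scaleR_left[OF has_derivative_ident, of y] gd]
      by (simp add: o_def)
    then have "((\<lambda>t. grad (t *\<^sub>R y)) has_derivative (\<lambda>s. s *\<^sub>R H (t *\<^sub>R y) y)) (at t)"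
      using linear_scale[OF lin] by simp
    then have "((\<lambda>t. grad (t *\<^sub>R y) \<bullet> y) has_derivative (\<lambda>s. s * (H (t *\<^sub>R y) y \<bullet> y))) (at t)"
      using has_derivative_inner_left[of _ _ _ y] by fastforce
    then have "((\<lambda>t. grad (t *\<^sub>R y) \<bullet> y + t * (y \<bullet> y) / 2) has_derivative (\<lambda>s. s * (H (t *\<^sub>R y) y \<bullet> y) + s * (y \<bullet> y) / 2)) (at t)"
      by (rule has_derivative_add) (auto intro!: derivative_eq_intros)
    then show ?thesis unfolding psi_def has_field_derivative_def
      by (rule has_derivative_eq_rhs) (auto simp: fun_eq_iff algebra_simps)
  qed
  have psile: "psi t \<le> psi 0" if "0 \<le> t" for t
  proof (rule DERIV_nonpos_imp_nonincreasing[OF that])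
    fix x :: real
    have "H (x *\<^sub>R y) y \<bullet> y + (y \<bullet> y)/2 \<le> 0" using hs[of y "x *\<^sub>R y"] by (simp add: inner_commute)
    then show "\<exists>d. DERIV psi x :> d \<and> d \<le> 0" using psid by blast
  qed
  have psi0: "psi 0 = 0" by (simp add: psi_def g0)
  define phi where "phi t = f (t *\<^sub>R y) + t * (y \<bullet> y) / 2" for t
  have phid: "DERIV phi t :> (grad (t *\<^sub>R y) \<bullet> y + (y \<bullet> y)/2)" for t
  proof -
    have "((\<lambda>t. f (t *\<^sub>R y)) has_derivative (\<lambda>s. grad (t *\<^sub>R y) \<bullet> (s *\<^sub>R y))) (at t)"
      using has_derivative_compose[OF has_derivative_scaleR_left[OF has_derivative_ident, of y] fd]
      by (simp add: o_def)
    then show ?thesis unfolding phi_def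
      by (auto intro!: derivative_eq_intros simp: has_field_derivative_def algebra_simps
          elim: has_derivative_eq_rhs)
  qed
  have "phi 2 \<le> phi 1"
  proof (rule DERIV_nonpos_imp_nonincreasing[of 1 2 phi])
    fix t :: real assume t: "1 \<le> t" "t \<le> 2"
    have "psi t \<le> 0" using psile[of t] psi0 t by simp
    then have "grad (t *\<^sub>R y) \<bullet> y + (y \<bullet> y)/2 \<le> 0"
    proof -
      have "1 * (y \<bullet> y) \<le> t * (y \<bullet> y)" using t inner_ge_zero[of y] by (intro mult_right_mono) auto
      then show ?thesis using \<open>psi t \<le> 0\<close> unfolding psi_def by linarith
    qed
    then show "\<exists>d. DERIV phi t :> d \<and> d \<le> 0" using phid by blast
  next
    show "(1::real) \<le> 2" by simp
  qed
  then show ?thesis by (simp add: phi_def power2_norm_eq_inner)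
qed

lemma L1:
  fixes f :: "'a::euclidean_space \<Rightarrow> real" and h :: "'a \<Rightarrow> ennreal"
  assumes [measurable]: "f \<in> borel_measurable borel" "h \<in> borel_measurable borel"
    and scl: "\<And>y. f (2 *\<^sub>R y) \<le> f y - (norm y)^2/2"
  shows "(\<integral>\<^sup>+x. ennreal (exp (f x)) * h x \<partial>lborel) \<le>
     2^DIM('a) * (\<integral>\<^sup>+y. ennreal (exp (f y) * exp (-((norm y)^2/2))) * h (2 *\<^sub>R y) \<partial>lborel)"
proof -
  have "(\<integral>\<^sup>+x. ennreal (exp (f x)) * h x \<partial>lborel) =
     2^DIM('a) * (\<integral>\<^sup>+y. ennreal (exp (f (2 *\<^sub>R y))) * h (2 *\<^sub>R y) \<partial>lborel)"
    by (rule scale2) measurable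
  also have "\<dots> \<le> 2^DIM('a) * (\<integral>\<^sup>+y. ennreal (exp (f y) * exp (-((norm y)^2/2))) * h (2 *\<^sub>R y) \<partial>lborel)"
  proof (rule mult_left_mono[OF nn_integral_mono[OF mult_right_mono]])
    fix y :: 'a
    have le: "exp (f (2 *\<^sub>R y)) \<le> exp (f y - (norm y)^2/2)" using scl[of y] by simp
    have eq: "exp (f y) * exp (-((norm y)^2/2)) = exp (f y - (norm y)^2/2)"
      by (simp add: exp_add[symmetric])
    show "ennreal (exp (f (2 *\<^sub>R y))) \<le> ennreal (exp (f y) * exp (-((norm y)^2/2)))"
      unfolding eq using le by (rule ennreal_leI)
  qed simp_all
  finally show ?thesis .
qed

lemma half_bound:
  fixes x a :: ennreal
  assumes "x < \<infinity>" "x \<le> a + x / 2"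
  shows "x \<le> 2 * a"
proof (cases "a = \<infinity>")
  case True then show ?thesis by simp
next
  case False
  obtain x' where x': "x = ennreal x'" "0 \<le> x'" using assms(1) by (cases x) auto
  obtain a' where a': "a = ennreal a'" "0 \<le> a'" using False by (cases a) auto
  have "x / 2 = ennreal (x'/2)" using x' divide_ennreal[of x' 2] by simp
  have e: "ennreal (a' + x'/2) = ennreal a' + ennreal (x'/2)" by (rule ennreal_plus) (use a' x' in auto)
  have "ennreal x' \<le> ennreal (a' + x'/2)" unfolding e using assms(2) x' a' \<open>x / 2 = ennreal (x'/2)\<close> by simp
  then have "x' \<le> a' + x'/2" using a' x' by (subst (asm) ennreal_le_iff) auto
  then have "x' \<le> 2 * a'" by simp
  then have "ennreal x' \<le> ennreal (2 * a')" by (rule ennreal_leI)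
  then show ?thesis using x' a' by (simp add: ennreal_mult)
qed

lemma L1r:
  fixes f :: "'a::euclidean_space \<Rightarrow> real" and g :: "'a \<Rightarrow> real"
  assumes [measurable]: "f \<in> borel_measurable borel" "g \<in> borel_measurable borel"
    and gnn: "\<And>x. g x \<ge> 0"
    and scl: "\<And>y. f (2 *\<^sub>R y) \<le> f y - (norm y)^2/2"
  shows "(\<integral>\<^sup>+x. ennreal (exp (f x) * g x) \<partial>lborel) \<le>
     2^DIM('a) * (\<integral>\<^sup>+y. ennreal (exp (f y) * exp (-((norm y)^2/2)) * g (2 *\<^sub>R y)) \<partial>lborel)"
proof -
  have "(\<integral>\<^sup>+x. ennreal (exp (f x) * g x) \<partial>lborel) = (\<integral>\<^sup>+x. ennreal (exp (f x)) * ennreal (g x) \<partial>lborel)"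
    by (intro nn_integral_cong) (simp add: ennreal_mult gnn)
  also have "\<dots> \<le> 2^DIM('a) * (\<integral>\<^sup>+y. ennreal (exp (f y) * exp (-((norm y)^2/2))) * ennreal (g (2 *\<^sub>R y)) \<partial>lborel)"
    by (rule L1) (auto simp: scl)
  also have "(\<integral>\<^sup>+y. ennreal (exp (f y) * exp (-((norm y)^2/2))) * ennreal (g (2 *\<^sub>R y)) \<partial>lborel)
     = (\<integral>\<^sup>+y. ennreal (exp (f y) * exp (-((norm y)^2/2)) * g (2 *\<^sub>R y)) \<partial>lborel)"
    by (intro nn_integral_cong) (simp add: ennreal_mult gnn)
  finally show ?thesis .
qed

lemma fin:
  fixes f :: "'a::euclidean_space \<Rightarrow> real"
  assumes cont: "continuous_on UNIV f"
    and scl: "\<And>y. f (2 *\<^sub>R y) \<le> f y - (norm y)^2/2"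
  shows "(\<integral>\<^sup>+x. ennreal (exp (f x)) \<partial>lborel) < \<infinity>"
proof -
  have [measurable]: "f \<in> borel_measurable borel" using cont by (rule borel_measurable_continuous_onI)
  have cb[measurable]: "cball (0::'a) r \<in> sets borel" for r by (simp add: borel_closed)
  define W where "W R = (\<integral>\<^sup>+x. ennreal (exp (f x) * indicator (cball 0 R) x) \<partial>lborel)" for R :: real
  have Wfin: "W R < \<infinity>" for R
  proof -
    have "integrable lborel (\<lambda>x. indicator (cball (0::'a) R) x *\<^sub>R exp (f x))"
      by (rule borel_integrable_compact) (auto intro!: continuous_on_exp continuous_on_subset[OF cont])
    from integrableD(2)[OF this] show ?thesis unfolding W_def
      by (simp add: mult.commute less_top)
  qed
  have Wmono: "W R \<le> W S" if "R \<le> S" for R S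
    unfolding W_def using that by (intro nn_integral_mono ennreal_leI mult_left_mono) (auto split: split_indicator)
  define D where "D = DIM('a)"
  have two: "ennreal ((2::real)^D) = 2^D" using ennreal_power[of 2 D] by simp
  define \<rho> where "\<rho> = sqrt (2^(D+2))"
  have rho2: "\<rho>^2/2 = 2^(D+1)" unfolding \<rho>_def by simp
  have rho: "2^D * exp (-(\<rho>^2/2)) \<le> 1/2"
  proof -
    have "(2::real)^(D+1) \<le> exp (2^(D+1))" using exp_ge_add_one_self[of "2^(D+1)"] by linarith
    then show ?thesis unfolding rho2 by (simp add: exp_minus field_simps)
  qed
  have key: "W (2*R) \<le> 2^(D+1) * W \<rho>" if R0: "R \<ge> 0" for R
  proof -
    have "W (2*R) \<le> 2^D * (\<integral>\<^sup>+y. ennreal (exp (f y) * exp (-((norm y)^2/2)) * indicator (cball 0 (2*R)) (2 *\<^sub>R y)) \<partial>lborel)"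
      unfolding W_def D_def by (rule L1r) (auto simp: scl intro!: borel_measurable_indicator borel_closed)
    also have "\<dots> \<le> 2^D * (\<integral>\<^sup>+y. ennreal (exp (f y) * indicator (cball 0 \<rho>) y) + ennreal (exp (-(\<rho>^2/2))) * ennreal (exp (f y) * indicator (cball 0 R) y) \<partial>lborel)"
    proof (intro mult_left_mono nn_integral_mono)
      fix y :: 'a
      have ind: "indicator (cball 0 (2*R)) (2 *\<^sub>R y) = (indicator (cball 0 R) y :: real)"
        by (simp add: indicator_def)
      have "exp (f y) * exp (-((norm y)^2/2)) * indicator (cball 0 R) y \<le>
            exp (f y) * indicator (cball 0 \<rho>) y + exp (-(\<rho>^2/2)) * (exp (f y) * indicator (cball 0 R) y)"
      proof (cases "norm y \<le> \<rho>")
        case True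
        have "exp (-((norm y)^2/2)) \<le> 1" by simp
        then have "exp (f y) * exp (-((norm y)^2/2)) * indicator (cball 0 R) y \<le> exp (f y) * indicator (cball 0 \<rho>) y"
          using True by (auto simp: indicator_def)
        then show ?thesis by (smt (verit) exp_gt_zero indicator_pos_le mult_nonneg_nonneg)
      next
        case False
        then have "\<rho>^2 \<le> (norm y)^2" unfolding \<rho>_def by (intro power_mono) auto
        then have "exp (-((norm y)^2/2)) \<le> exp (-(\<rho>^2/2))" by simp
        then have "exp (f y) * exp (-((norm y)^2/2)) * indicator (cball 0 R) y \<le> exp (-(\<rho>^2/2)) * (exp (f y) * indicator (cball 0 R) y)"
          by (auto simp: indicator_def)
        then show ?thesis by (smt (verit) exp_gt_zero indicator_pos_le mult_nonneg_nonneg)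
      qed
      then show "ennreal (exp (f y) * exp (-((norm y)^2/2)) * indicator (cball 0 (2*R)) (2 *\<^sub>R y)) \<le>
         ennreal (exp (f y) * indicator (cball 0 \<rho>) y) + ennreal (exp (-(\<rho>^2/2))) * ennreal (exp (f y) * indicator (cball 0 R) y)"
        unfolding ind by (simp add: ennreal_mult[symmetric] ennreal_plus[symmetric] del: ennreal_plus)
    qed simp
    also have "\<dots> = 2^D * (W \<rho> + ennreal (exp (-(\<rho>^2/2))) * W R)"
      unfolding W_def by (subst nn_integral_add) (measurable, simp add: nn_integral_cmult)
    also have "\<dots> = 2^D * W \<rho> + ennreal (2^D * exp (-(\<rho>^2/2))) * W R"
      by (simp add: distrib_left ennreal_mult two mult.assoc)
    also have "\<dots> \<le> 2^D * W \<rho> + ennreal (1/2) * W (2*R)"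
      by (intro add_left_mono mult_mono ennreal_leI rho Wmono) (use R0 in auto)
    finally have "W (2*R) \<le> 2^D * W \<rho> + W (2*R) / 2"
      by (simp add: divide_ennreal_def mult.commute)
    then have "W (2*R) \<le> 2 * (2^D * W \<rho>)" by (rule half_bound[OF Wfin])
    then show ?thesis by (simp add: mult.assoc)
  qed
  have "(\<integral>\<^sup>+x. ennreal (exp (f x)) \<partial>lborel) = (\<integral>\<^sup>+x. (SUP n. ennreal (exp (f x) * indicator (cball 0 (real n)) x)) \<partial>lborel)"
  proof (intro nn_integral_cong)
    fix x :: 'a
    show "ennreal (exp (f x)) = (SUP n. ennreal (exp (f x) * indicator (cball 0 (real n)) x))"
    proof (rule antisym)
      obtain n :: nat where "norm x \<le> real n" using real_arch_simple by blast
      then show "ennreal (exp (f x)) \<le> (SUP n. ennreal (exp (f x) * indicator (cball 0 (real n)) x))"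
        by (intro SUP_upper2[of n]) auto
      show "(SUP n. ennreal (exp (f x) * indicator (cball 0 (real n)) x)) \<le> ennreal (exp (f x))"
        by (intro SUP_least ennreal_leI) (auto simp: indicator_def)
    qed
  qed
  also have "\<dots> = (SUP n. W (real n))"
    unfolding W_def
    by (rule nn_integral_monotone_convergence_SUP)
       (auto simp: incseq_def le_fun_def intro!: ennreal_leI mult_left_mono split: split_indicator)
  also have "\<dots> \<le> 2^(D+1) * W \<rho>"
    using key[of "real _ / 2"] by (intro SUP_least) auto
  also have "\<dots> < \<infinity>" using Wfin[of \<rho>] by (simp add: ennreal_mult_less_top power_less_top_ennreal)
  finally show ?thesis .
qed

lemma enn_le: "ennreal a \<le> ennreal b \<Longrightarrow> 0 \<le> b \<Longrightarrow> a \<le> b"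
  by (simp add: ennreal_le_iff)

lemma bounds:
  fixes f :: "'a::euclidean_space \<Rightarrow> real" and C :: real
  assumes cont: "continuous_on UNIV f"
    and scl: "\<And>y. f (2 *\<^sub>R y) \<le> f y - (norm y)^2/2"
    and C0: "C \<ge> 0"
  shows "integrable lborel (\<lambda>x. exp (f x))" "(\<integral>x. exp (f x) \<partial>lborel) > 0"
    "integrable lborel (\<lambda>x. exp (f x) * norm x)"
    "(\<integral>x. exp (f x) * norm x \<partial>lborel) \<le> 2^(DIM('a)+1) * (\<integral>x. exp (f x) \<partial>lborel)"
    "integrable lborel (\<lambda>x. exp (f x) * indicator {x. C \<le> norm x} x)"
    "(\<integral>x. exp (f x) * indicator {x. C \<le> norm x} x \<partial>lborel) \<le> 2^DIM('a) * exp (-(C^2/8)) * (\<integral>x. exp (f x) \<partial>lborel)"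
proof -
  have [measurable]: "f \<in> borel_measurable borel" using cont by (rule borel_measurable_continuous_onI)
  define D where "D = DIM('a)"
  have two: "ennreal ((2::real)^n) = 2^n" for n using ennreal_power[of 2 n] by simp
  have Zfin: "(\<integral>\<^sup>+x. ennreal (exp (f x)) \<partial>lborel) < \<infinity>" by (rule fin[OF cont scl])
  show iZ: "integrable lborel (\<lambda>x. exp (f x))"
    by (rule integrableI_nonneg) (use Zfin in auto)
  define Z where "Z = (\<integral>x. exp (f x) \<partial>lborel)"
  have Zeq: "(\<integral>\<^sup>+x. ennreal (exp (f x)) \<partial>lborel) = ennreal Z"
    unfolding Z_def by (rule nn_integral_eq_integral[OF iZ]) auto
  have Z0: "Z \<ge> 0" unfolding Z_def by simp
  have "(\<integral>\<^sup>+x. ennreal (exp (f x)) \<partial>lborel) \<noteq> 0"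
  proof
    assume "(\<integral>\<^sup>+x. ennreal (exp (f x)) \<partial>lborel) = 0"
    then have "AE x in lborel. ennreal (exp (f x)) = 0" by (subst (asm) nn_integral_0_iff_AE) auto
    then have "AE x in (lborel :: 'a measure). False" by simp
    then have "(UNIV :: 'a set) \<in> null_sets lborel" by (subst AE_iff_null_sets) auto
    then show False using null_setsD1 by fastforce
  qed
  then have "Z \<noteq> 0" using Zeq by auto
  then show "(\<integral>x. exp (f x) \<partial>lborel) > 0" using Z0 unfolding Z_def by linarith
  have mom: "(\<integral>\<^sup>+x. ennreal (exp (f x) * norm x) \<partial>lborel) \<le> 2^(D+1) * ennreal Z"
  proof -
    have "(\<integral>\<^sup>+x. ennreal (exp (f x) * norm x) \<partial>lborel) \<le>
      2^D * (\<integral>\<^sup>+y. ennreal (exp (f y) * exp (-((norm y)^2/2)) * norm (2 *\<^sub>R y)) \<partial>lborel)"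
      unfolding D_def by (rule L1r) (auto simp: scl)
    also have "\<dots> \<le> 2^D * (\<integral>\<^sup>+y. 2 * ennreal (exp (f y)) \<partial>lborel)"
    proof (intro mult_left_mono nn_integral_mono)
      fix y :: 'a
      define r where "r = norm y"
      have "(r - 1)^2 = r^2 - 2*r + 1" by (simp add: power2_eq_square algebra_simps)
      moreover have "0 \<le> (r - 1)^2" by simp
      ultimately have "r \<le> 1 + r^2/2" by linarith
      also have "\<dots> \<le> exp (r^2/2)" by (rule exp_ge_add_one_self)
      finally have rle: "r \<le> exp (r^2/2)" .
      have e1: "exp (r^2/2) * exp (-(r^2/2)) = 1" by (simp add: exp_add[symmetric])
      have "r * exp (-(r^2/2)) \<le> exp (r^2/2) * exp (-(r^2/2))" by (rule mult_right_mono[OF rle]) simp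
      then have "r * exp (-(r^2/2)) \<le> 1" unfolding e1 .
      then have "exp (f y) * (r * exp (-(r^2/2))) \<le> exp (f y) * 1" by (intro mult_left_mono) auto
      then have "exp (f y) * exp (-((norm y)^2/2)) * norm (2 *\<^sub>R y) \<le> 2 * exp (f y)"
      proof -
        have "exp (f y) * exp (-((norm y)^2/2)) * norm (2 *\<^sub>R y) = 2 * (exp (f y) * (r * exp (-(r^2/2))))"
          by (simp add: r_def mult_ac)
        then show ?thesis using \<open>exp (f y) * (r * exp (-(r^2/2))) \<le> exp (f y) * 1\<close> by linarith
      qed
      then show "ennreal (exp (f y) * exp (-((norm y)^2/2)) * norm (2 *\<^sub>R y)) \<le> 2 * ennreal (exp (f y))"
      proof -
        have "ennreal (2 * exp (f y)) = 2 * ennreal (exp (f y))" by (simp add: ennreal_mult)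
        with \<open>exp (f y) * exp (-((norm y)^2/2)) * norm (2 *\<^sub>R y) \<le> 2 * exp (f y)\<close>
        show ?thesis by (metis ennreal_leI)
      qed
    qed simp
    also have "\<dots> = 2^(D+1) * ennreal Z"
    proof -
      have "(\<integral>\<^sup>+y. 2 * ennreal (exp (f y)) \<partial>lborel) = 2 * ennreal Z" by (simp add: nn_integral_cmult Zeq)
      then show ?thesis by (simp add: mult_ac)
    qed
    finally show ?thesis .
  qed
  show iM: "integrable lborel (\<lambda>x. exp (f x) * norm x)"
  proof -
    have "2^(D+1) * ennreal Z < \<infinity>"
      by (simp add: ennreal_mult_less_top power_less_top_ennreal)
    with mom have "(\<integral>\<^sup>+x. ennreal (exp (f x) * norm x) \<partial>lborel) < \<infinity>" by (rule le_less_trans)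
    then show ?thesis by (intro integrableI_nonneg) auto
  qed
  have "ennreal (\<integral>x. exp (f x) * norm x \<partial>lborel) = (\<integral>\<^sup>+x. ennreal (exp (f x) * norm x) \<partial>lborel)"
    by (rule nn_integral_eq_integral[OF iM, symmetric]) auto
  also have "\<dots> \<le> ennreal (2^(D+1) * Z)" using mom by (simp add: ennreal_mult two Z0)
  finally have "(\<integral>x. exp (f x) * norm x \<partial>lborel) \<le> 2^(D+1) * Z"
    by (rule enn_le) (use Z0 in simp)
  then show "(\<integral>x. exp (f x) * norm x \<partial>lborel) \<le> 2^(DIM('a)+1) * (\<integral>x. exp (f x) \<partial>lborel)"
    unfolding D_def Z_def .
  show iT: "integrable lborel (\<lambda>x. exp (f x) * indicator {x. C \<le> norm x} x)"
    by (rule Bochner_Integration.integrable_bound[OF iZ]) (auto split: split_indicator)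
  have tl: "(\<integral>\<^sup>+x. ennreal (exp (f x) * indicator {x. C \<le> norm x} x) \<partial>lborel) \<le> ennreal (2^D * exp (-(C^2/8)) * Z)"
  proof -
    have "(\<integral>\<^sup>+x. ennreal (exp (f x) * indicator {x. C \<le> norm x} x) \<partial>lborel) \<le>
      2^D * (\<integral>\<^sup>+y. ennreal (exp (f y) * exp (-((norm y)^2/2)) * indicator {x. C \<le> norm x} (2 *\<^sub>R y)) \<partial>lborel)"
      unfolding D_def by (rule L1r) (auto simp: scl)
    also have "\<dots> \<le> 2^D * (\<integral>\<^sup>+y. ennreal (exp (-(C^2/8))) * ennreal (exp (f y)) \<partial>lborel)"
    proof (intro mult_left_mono nn_integral_mono)
      fix y :: 'a
      have "exp (f y) * exp (-((norm y)^2/2)) * indicator {x. C \<le> norm x} (2 *\<^sub>R y) \<le> exp (-(C^2/8)) * exp (f y)"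
      proof (cases "C \<le> norm (2 *\<^sub>R y)")
        case True
        then have "C \<le> 2 * norm y" by simp
        then have "C^2 \<le> (2 * norm y)^2" using C0 by (intro power_mono) auto
        then have "C^2 \<le> 4 * (norm y)^2" by (simp add: power_mult_distrib)
        then have "-((norm y)^2/2) \<le> -(C^2/8)" by linarith
        then have "exp (-((norm y)^2/2)) \<le> exp (-(C^2/8))" by simp
        then have "exp (f y) * exp (-((norm y)^2/2)) \<le> exp (f y) * exp (-(C^2/8))" by (rule mult_left_mono) simp
        moreover have "indicator {x. C \<le> norm x} (2 *\<^sub>R y) = (1::real)" using True by simp
        ultimately show ?thesis by (simp add: mult.commute)
      qed simp
      then show "ennreal (exp (f y) * exp (-((norm y)^2/2)) * indicator {x. C \<le> norm x} (2 *\<^sub>R y)) \<le> ennreal (exp (-(C^2/8))) * ennreal (exp (f y))"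
        by (subst ennreal_mult[symmetric]) (auto intro: ennreal_leI)
    qed simp
    also have "\<dots> = ennreal (2^D * exp (-(C^2/8)) * Z)"
    proof -
      have "(\<integral>\<^sup>+y. ennreal (exp (-(C^2/8))) * ennreal (exp (f y)) \<partial>lborel) = ennreal (exp (-(C^2/8))) * ennreal Z"
        by (simp add: nn_integral_cmult Zeq)
      moreover have "ennreal (2^D * exp (-(C^2/8)) * Z) = 2^D * (ennreal (exp (-(C^2/8))) * ennreal Z)"
      proof -
        have e1: "ennreal (2^D * exp (-(C^2/8)) * Z) = ennreal (2^D * exp (-(C^2/8))) * ennreal Z"
          by (rule ennreal_mult'') (rule Z0)
        have e2: "ennreal ((2::real)^D * exp (-(C^2/8))) = ennreal (2^D) * ennreal (exp (-(C^2/8)))"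
          by (rule ennreal_mult'') simp
        show ?thesis unfolding e1 e2 two by (simp only: mult.assoc)
      qed
      ultimately show ?thesis by (simp only:)
    qed
    finally show ?thesis .
  qed
  have "ennreal (\<integral>x. exp (f x) * indicator {x. C \<le> norm x} x \<partial>lborel) = (\<integral>\<^sup>+x. ennreal (exp (f x) * indicator {x. C \<le> norm x} x) \<partial>lborel)"
    by (rule nn_integral_eq_integral[OF iT, symmetric]) auto
  note eq = this
  have "ennreal (\<integral>x. exp (f x) * indicator {x. C \<le> norm x} x \<partial>lborel) \<le> ennreal (2^D * exp (-(C^2/8)) * Z)"
    unfolding eq by (rule tl)
  then have "(\<integral>x. exp (f x) * indicator {x. C \<le> norm x} x \<partial>lborel) \<le> 2^D * exp (-(C^2/8)) * Z"
    by (rule enn_le) (simp add: Z0)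
  then show "(\<integral>x. exp (f x) * indicator {x. C \<le> norm x} x \<partial>lborel) \<le> 2^DIM('a) * exp (-(C^2/8)) * (\<integral>x. exp (f x) \<partial>lborel)"
    unfolding D_def Z_def .
qed

theorem lemma5:
  fixes \<delta> :: real
  assumes "\<delta> > 0"
  shows "\<exists>C::real. C > 0 \<and>
    (\<forall>(f :: nat \<Rightarrow> real^'d \<Rightarrow> real) (grad :: nat \<Rightarrow> real^'d \<Rightarrow> real^'d)
       (H :: nat \<Rightarrow> real^'d \<Rightarrow> real^'d \<Rightarrow> real^'d) (\<gamma> :: real^'d) (\<beta> :: nat \<Rightarrow> real^'d).
       (\<forall>n x. (f n has_derivative (\<lambda>h. grad n x \<bullet> h)) (at x)) \<longrightarrow>
       (\<forall>n x. (grad n has_derivative H n x) (at x)) \<longrightarrow>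
       (\<forall>n. strictly_concave_on UNIV (f n)) \<longrightarrow>
       (\<forall>n. \<forall>x. x \<noteq> 0 \<longrightarrow> f n x < f n 0) \<longrightarrow>
       (\<forall>n x v. v \<bullet> H n x v \<le> - (1/2) * (v \<bullet> v)) \<longrightarrow>
       filterlim (\<lambda>n. \<gamma> \<bullet> \<beta> n) at_top sequentially \<longrightarrow>
       (\<forall>\<^sub>F n in sequentially.
          (\<integral>x. (\<gamma> \<bullet> (x + \<beta> n)) * exp (f n x) \<partial>lborel) > 0 \<and>
          \<bar>set_lebesgue_integral lborel {x. norm x \<ge> C} (\<lambda>x. (\<gamma> \<bullet> (x + \<beta> n)) * exp (f n x))\<bar>
            / (\<integral>x. (\<gamma> \<bullet> (x + \<beta> n)) * exp (f n x) \<partial>lborel) \<le> \<delta>))"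
proof -
  define K :: real where "K = 2^(DIM(real^'d)+1)"
  have K0: "K > 0" unfolding K_def by simp
  define C where "C = sqrt (8 * K / \<delta>)"
  have C0: "C > 0" unfolding C_def using K0 assms by simp
  have C2: "C^2 = 8 * K / \<delta>" unfolding C_def using K0 assms by simp
  have eps: "2^DIM(real^'d) * exp (-(C^2/8)) \<le> \<delta>/2"
  proof -
    have e: "1 + K / \<delta> \<le> exp (K / \<delta>)" by (rule exp_ge_add_one_self)
    have c8: "C^2/8 = K / \<delta>" unfolding C2 by simp
    have "K / \<delta> \<le> exp (C^2/8)" unfolding c8 using e by linarith
    then have "K \<le> \<delta> * exp (C^2/8)" using assms by (simp add: divide_le_eq mult.commute)
    then have "K * exp (-(C^2/8)) \<le> \<delta> * exp (C^2/8) * exp (-(C^2/8))" by (rule mult_right_mono) simp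
    also have "\<dots> = \<delta>" by (simp add: exp_minus)
    finally have "K * exp (-(C^2/8)) \<le> \<delta>" .
    then show ?thesis unfolding K_def by simp
  qed
  show ?thesis
  proof (intro exI[of _ C] conjI C0 allI impI)
    fix f :: "nat \<Rightarrow> real^'d \<Rightarrow> real" and grad :: "nat \<Rightarrow> real^'d \<Rightarrow> real^'d"
      and H :: "nat \<Rightarrow> real^'d \<Rightarrow> real^'d \<Rightarrow> real^'d" and \<gamma> :: "real^'d" and \<beta> :: "nat \<Rightarrow> real^'d"
    assume fd: "\<forall>n x. (f n has_derivative (\<lambda>h. grad n x \<bullet> h)) (at x)"
      and gd: "\<forall>n x. (grad n has_derivative H n x) (at x)"
      and sc: "\<forall>n. strictly_concave_on UNIV (f n)"
      and mx: "\<forall>n. \<forall>x. x \<noteq> 0 \<longrightarrow> f n x < f n 0"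
      and hs: "\<forall>n x v. v \<bullet> H n x v \<le> - (1/2) * (v \<bullet> v)"
      and lim: "filterlim (\<lambda>n. \<gamma> \<bullet> \<beta> n) at_top sequentially"
    define g where "g = norm \<gamma> * K"
    have g0: "g \<ge> 0" unfolding g_def using K0 by simp
    define M where "M = 2 * g * (1 + \<delta>) / \<delta> + 1"
    have ev: "\<forall>\<^sub>F n in sequentially. M \<le> \<gamma> \<bullet> \<beta> n" using lim by (simp add: filterlim_at_top)
    show "\<forall>\<^sub>F n in sequentially.
          (\<integral>x. (\<gamma> \<bullet> (x + \<beta> n)) * exp (f n x) \<partial>lborel) > 0 \<and>
          \<bar>set_lebesgue_integral lborel {x. norm x \<ge> C} (\<lambda>x. (\<gamma> \<bullet> (x + \<beta> n)) * exp (f n x))\<bar>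
            / (\<integral>x. (\<gamma> \<bullet> (x + \<beta> n)) * exp (f n x) \<partial>lborel) \<le> \<delta>"
      using ev
    proof (rule eventually_mono)
      fix n assume aM: "M \<le> \<gamma> \<bullet> \<beta> n"
      define a where "a = \<gamma> \<bullet> \<beta> n"
      have Mg: "g < M"
      proof -
        have "0 \<le> 2*g/\<delta>" using g0 assms by simp
        moreover have "2*g*(1+\<delta>)/\<delta> = 2*g/\<delta> + 2*g" using assms by (simp add: field_simps)
        ultimately show ?thesis unfolding M_def using g0 by linarith
      qed
      have ag: "g < a" using aM Mg unfolding a_def by linarith
      have a0: "a > 0" using ag g0 by linarith
      have adel: "2 * g * (1 + \<delta>) \<le> a * \<delta>"
      proof -
        have "2 * g * (1 + \<delta>) / \<delta> \<le> a" using aM unfolding M_def a_def by linarith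
        then show ?thesis using assms by (simp add: divide_le_eq)
      qed
      have cont: "continuous_on UNIV (f n)"
        using fd by (meson continuous_at_imp_continuous_on has_derivative_continuous)
      have scl: "f n (2 *\<^sub>R y) \<le> f n y - (norm y)^2/2" for y
        by (rule calc[of "f n" "grad n" "H n"]) (use fd gd mx hs in auto)
      note B = bounds[OF cont scl C0[THEN less_imp_le]]
      define e where "e x = exp (f n x)" for x
      define Z where "Z = (\<integral>x. e x \<partial>lborel)"
      define Mo where "Mo = (\<integral>x. e x * norm x \<partial>lborel)"
      define T where "T = (\<integral>x. e x * indicator {x. C \<le> norm x} x \<partial>lborel)"
      have iZ: "integrable lborel e" and Zp: "Z > 0" and iM: "integrable lborel (\<lambda>x. e x * norm x)"
        and MoZ: "Mo \<le> K * Z" and iT: "integrable lborel (\<lambda>x. e x * indicator {x. C \<le> norm x} x)"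
        and TZ: "T \<le> 2^DIM(real^'d) * exp (-(C^2/8)) * Z"
        using B unfolding e_def[abs_def] Z_def Mo_def T_def K_def by auto
      have TZ': "T \<le> \<delta>/2 * Z" using TZ mult_right_mono[OF eps, of Z] Zp by linarith
      have [measurable]: "f n \<in> borel_measurable borel" using cont by (rule borel_measurable_continuous_onI)
      have em[measurable]: "e \<in> borel_measurable borel" unfolding e_def[abs_def] by measurable
      have iG: "integrable lborel (\<lambda>x. (\<gamma> \<bullet> x) * e x)"
      proof (rule Bochner_Integration.integrable_bound[OF integrable_mult_right[OF iM, of "norm \<gamma>"]])
        show "(\<lambda>x. (\<gamma> \<bullet> x) * e x) \<in> borel_measurable lborel" by measurable
        show "AE x in lborel. norm ((\<gamma> \<bullet> x) * e x) \<le> norm (norm \<gamma> * (e x * norm x))"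
          using Cauchy_Schwarz_ineq2[of \<gamma>] by (auto simp: e_def abs_mult intro!: mult_right_mono)
      qed
      have Feq: "(\<lambda>x. (\<gamma> \<bullet> (x + \<beta> n)) * exp (f n x)) = (\<lambda>x. a * e x + (\<gamma> \<bullet> x) * e x)"
        by (auto simp: a_def e_def inner_add_right algebra_simps)
      have iF: "integrable lborel (\<lambda>x. a * e x + (\<gamma> \<bullet> x) * e x)"
        using iZ iG by auto
      have "(\<integral>x. (\<gamma> \<bullet> x) * e x \<partial>lborel) \<ge> (\<integral>x. - (norm \<gamma> * (e x * norm x)) \<partial>lborel)"
      proof (rule integral_mono[OF _ iG])
        show "integrable lborel (\<lambda>x. - (norm \<gamma> * (e x * norm x)))" using iM by auto
        fix x
        have "- (norm \<gamma> * norm x) \<le> \<gamma> \<bullet> x" using Cauchy_Schwarz_ineq2[of \<gamma> x] by linarith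
        then have "- (norm \<gamma> * norm x) * e x \<le> (\<gamma> \<bullet> x) * e x" by (rule mult_right_mono) (simp add: e_def)
        then show "- (norm \<gamma> * (e x * norm x)) \<le> (\<gamma> \<bullet> x) * e x" by (simp add: mult_ac)
      qed
      also have "(\<integral>x. - (norm \<gamma> * (e x * norm x)) \<partial>lborel) = - (norm \<gamma> * Mo)"
        unfolding Mo_def by simp
      finally have G: "(\<integral>x. (\<gamma> \<bullet> x) * e x \<partial>lborel) \<ge> - (norm \<gamma> * Mo)" .
      have Den: "(\<integral>x. (\<gamma> \<bullet> (x + \<beta> n)) * exp (f n x) \<partial>lborel) = a * Z + (\<integral>x. (\<gamma> \<bullet> x) * e x \<partial>lborel)"
        unfolding Feq Z_def using iZ iG by simp
      have gMo: "norm \<gamma> * Mo \<le> g * Z" unfolding g_def using MoZ by (simp add: mult_left_mono mult.assoc)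
      have Dlow: "(\<integral>x. (\<gamma> \<bullet> (x + \<beta> n)) * exp (f n x) \<partial>lborel) \<ge> (a - g) * Z"
        using Den G gMo by (simp add: left_diff_distrib)
      have DZ: "(a - g) * Z > 0" using ag Zp by simp
      have Dpos: "(\<integral>x. (\<gamma> \<bullet> (x + \<beta> n)) * exp (f n x) \<partial>lborel) > 0" using Dlow DZ by linarith
      define A where "A = {x :: real^'d. C \<le> norm x}"
      have Am[measurable]: "A \<in> sets lborel" unfolding A_def by measurable
      have Num: "\<bar>set_lebesgue_integral lborel {x. norm x \<ge> C} (\<lambda>x. (\<gamma> \<bullet> (x + \<beta> n)) * exp (f n x))\<bar>
          \<le> a * T + norm \<gamma> * Mo"
      proof -
        have "\<bar>set_lebesgue_integral lborel {x. norm x \<ge> C} (\<lambda>x. (\<gamma> \<bullet> (x + \<beta> n)) * exp (f n x))\<bar>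
            = \<bar>\<integral>x. indicator A x *\<^sub>R (a * e x + (\<gamma> \<bullet> x) * e x) \<partial>lborel\<bar>"
          unfolding set_lebesgue_integral_def A_def Feq ..
        also have "\<dots> \<le> (\<integral>x. \<bar>indicator A x *\<^sub>R (a * e x + (\<gamma> \<bullet> x) * e x)\<bar> \<partial>lborel)"
          by (rule integral_abs_bound)
        also have "\<dots> \<le> (\<integral>x. a * (e x * indicator {x. C \<le> norm x} x) + norm \<gamma> * (e x * norm x) \<partial>lborel)"
        proof (rule integral_mono')
          show "integrable lborel (\<lambda>x. a * (e x * indicator {x. C \<le> norm x} x) + norm \<gamma> * (e x * norm x))"
            using iT iM by auto
          fix x :: "real^'d"
          have ep: "e x > 0" by (simp add: e_def)
          have "\<bar>a * e x + (\<gamma> \<bullet> x) * e x\<bar> \<le> a * e x + norm \<gamma> * (e x * norm x)"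
          proof -
            have "\<bar>a * e x + (\<gamma> \<bullet> x) * e x\<bar> = \<bar>a + \<gamma> \<bullet> x\<bar> * e x" using ep by (simp add: distrib_right[symmetric] abs_mult)
            also have "\<dots> \<le> (a + norm \<gamma> * norm x) * e x"
              using Cauchy_Schwarz_ineq2[of \<gamma> x] a0 ep by (intro mult_right_mono) auto
            finally show ?thesis by (simp add: algebra_simps)
          qed
          then show "\<bar>indicator A x *\<^sub>R (a * e x + (\<gamma> \<bullet> x) * e x)\<bar> \<le> a * (e x * indicator {x. C \<le> norm x} x) + norm \<gamma> * (e x * norm x)"
            using ep a0 unfolding A_def by (auto simp: indicator_def)
          show "0 \<le> a * (e x * indicator {x. C \<le> norm x} x) + norm \<gamma> * (e x * norm x)"
            using ep a0 by (auto simp: indicator_def)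
        qed
        also have "\<dots> = a * T + norm \<gamma> * Mo"
          unfolding T_def Mo_def using iT iM by simp
        finally show ?thesis .
      qed
      have "a * T + norm \<gamma> * Mo \<le> a * (\<delta>/2 * Z) + g * Z"
        using mult_left_mono[OF TZ', of a] a0 gMo by linarith
      also have "\<dots> \<le> \<delta> * ((a - g) * Z)"
      proof -
        have "(2 * g * (1 + \<delta>)) * Z \<le> (a * \<delta>) * Z" using adel Zp by (intro mult_right_mono) auto
        then show ?thesis by (simp add: algebra_simps)
      qed
      also have "\<dots> \<le> \<delta> * (\<integral>x. (\<gamma> \<bullet> (x + \<beta> n)) * exp (f n x) \<partial>lborel)"
        using Dlow assms by (intro mult_left_mono) auto
      finally have "\<bar>set_lebesgue_integral lborel {x. norm x \<ge> C} (\<lambda>x. (\<gamma> \<bullet> (x + \<beta> n)) * exp (f n x))\<bar>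
          \<le> \<delta> * (\<integral>x. (\<gamma> \<bullet> (x + \<beta> n)) * exp (f n x) \<partial>lborel)" using Num by linarith
      then show "(\<integral>x. (\<gamma> \<bullet> (x + \<beta> n)) * exp (f n x) \<partial>lborel) > 0 \<and>
          \<bar>set_lebesgue_integral lborel {x. norm x \<ge> C} (\<lambda>x. (\<gamma> \<bullet> (x + \<beta> n)) * exp (f n x))\<bar>
            / (\<integral>x. (\<gamma> \<bullet> (x + \<beta> n)) * exp (f n x) \<partial>lborel) \<le> \<delta>"
        using Dpos by (simp add: divide_le_eq)
    qed
  qed
qed

end
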